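(* Let $N\ge1$, let $a_1>a_2>a_3$ be real numbers, let $p_i,c_i,c'_i$ ($1\le i\le N$) be arbitrary real numbers and $s$ a fixed integer. For integers $l,m,n,s$ put $\eta_i(l,m,n,s)=p_is+\max(0,p_i-a_1)l+\max(0,p_i-a_2)m+\max(0,p_i-a_3)n+c_i$, $\eta'_i(l,m,n,s)=-p_is+\max(0,-p_i-a_1)l+\max(0,-p_i-a_2)m+\max(0,-p_i-a_3)n+c'_i$, $\phi_i(l,m,n,s)=\max(\eta_i(l,m,n,s),\eta'_i(l,m,n,s))$, and $\tau(l,m,n)=\max[\phi_i(l,m,n,s+j-1)]_{1\le i,j\le N}$. Then $\tau$ satisfies the ultradiscrete KP equation \[ \tau(l,m+1,n)+\tau(l+1,m,n+1)-a_2=\max\bigl(\tau(l+1,m,n)+\tau(l,m+1,n+1)-a_1,\ \tau(l,m,n+1)+\tau(l+1,m+1,n)-a_2\bigr) \] for all integers $l,m,n$.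
   Context: Ultradiscrete permanent (UP): for a real $N\times N$ matrix $A=(a_{ij})$, $\max[a_{ij}]_{1\le i,j\le N}\equiv\max_{\pi}\sum_{i=1}^N a_{i\pi(i)}$, the maximum over all permutations $\pi$ of $\{1,\dots,N\}$. *)

theory Defs
  imports "HOL-Combinatorics.Permutations" Complex_Main
begin

definition UP :: "nat \<Rightarrow> (nat \<Rightarrow> nat \<Rightarrow> real) \<Rightarrow> real" where
  "UP N a = Max {(\<Sum>i=1..N. a i (\<pi> i)) | \<pi>. \<pi> permutes {1..N}}"

definition eta :: "real \<Rightarrow> real \<Rightarrow> real \<Rightarrow> real \<Rightarrow> real \<Rightarrow> int \<Rightarrow> int \<Rightarrow> int \<Rightarrow> int \<Rightarrow> real" where
  "eta a1 a2 a3 p c l m n s = p * of_int s + max 0 (p - a1) * of_int l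
     + max 0 (p - a2) * of_int m + max 0 (p - a3) * of_int n + c"

definition eta' :: "real \<Rightarrow> real \<Rightarrow> real \<Rightarrow> real \<Rightarrow> real \<Rightarrow> int \<Rightarrow> int \<Rightarrow> int \<Rightarrow> int \<Rightarrow> real" where
  "eta' a1 a2 a3 p c' l m n s = - p * of_int s + max 0 (- p - a1) * of_int l
     + max 0 (- p - a2) * of_int m + max 0 (- p - a3) * of_int n + c'"

definition phi :: "real \<Rightarrow> real \<Rightarrow> real \<Rightarrow> real \<Rightarrow> real \<Rightarrow> real \<Rightarrow> int \<Rightarrow> int \<Rightarrow> int \<Rightarrow> int \<Rightarrow> real" where
  "phi a1 a2 a3 p c c' l m n s = max (eta a1 a2 a3 p c l m n s) (eta' a1 a2 a3 p c' l m n s)"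

definition tau :: "nat \<Rightarrow> real \<Rightarrow> real \<Rightarrow> real \<Rightarrow> (nat \<Rightarrow> real) \<Rightarrow> (nat \<Rightarrow> real) \<Rightarrow> (nat \<Rightarrow> real)
    \<Rightarrow> int \<Rightarrow> int \<Rightarrow> int \<Rightarrow> int \<Rightarrow> real" where
  "tau N a1 a2 a3 p c c' s l m n =
     UP N (\<lambda>i j. phi a1 a2 a3 (p i) (c i) (c' i) l m n (s + int j - 1))"

end

theory Submission
  imports Defs
begin


definition psi :: "real \<Rightarrow> real \<Rightarrow> real" where "psi a P = max (-P) (min (-a) P)"

lemma pl_psi: "0 \<le> P \<Longrightarrow> max 0 (P - a) - max 0 (-P - a) = P + psi a P"
  unfolding psi_def by (smt (z3))

lemma psi_bnd: "0 \<le> x \<Longrightarrow> x \<le> y \<Longrightarrow> -(y-x) \<le> psi a y - psi a x \<and> psi a y - psi a x \<le> y - x"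
  unfolding psi_def by (smt (z3))

lemma psi_mono: "0 \<le> x \<Longrightarrow> x \<le> y \<Longrightarrow> b \<le> a \<Longrightarrow> psi a y - psi a x \<le> psi b y - psi b x"
  unfolding psi_def by (smt (z3))

lemma psi0: "psi a 0 = 0" unfolding psi_def by simp

locale abc =
  fixes a1 a2 a3 :: real
  assumes a12: "a2 < a1" and a23: "a3 < a2"
begin

definition lam :: "nat \<Rightarrow> real \<Rightarrow> real" where
  "lam k q = (if k = 0 then max 0 (q - a2) + max 0 (-q - a1) + max 0 (-q - a3)
              else if k = 1 then max 0 (q - a1) + max 0 (-q - a2) + max 0 (-q - a3)
              else max 0 (q - a3) + max 0 (-q - a1) + max 0 (-q - a2))"

definition cst :: "nat \<Rightarrow> real" where "cst k = (if k = 1 then a1 else a2)"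
definition oo :: "nat \<Rightarrow> real \<Rightarrow> real" where "oo k P = (lam k P - lam k (-P)) / 2"
definition ev :: "real \<Rightarrow> real" where "ev P = (lam 0 P + lam 0 (-P)) / 2"
definition kap :: "nat \<Rightarrow> real \<Rightarrow> real" where "kap k P = - psi (cst k) P"
definition Th :: "nat \<Rightarrow> real \<Rightarrow> int \<Rightarrow> real" where
  "Th k P m = of_int m * oo k P - P * (of_int m)^2 / 2 - kap k P"

lemma lam_split: "lam k q = ev q + oo k q"
  unfolding ev_def oo_def lam_def by (auto simp: field_simps)

lemma oo_neg: "oo k (-q) = - oo k q" unfolding oo_def by (simp add: field_simps)

lemma oo0: "0 \<le> P \<Longrightarrow> oo 0 P = (-P - psi a1 P + psi a2 P - psi a3 P)/2"
  using pl_psi[of P a1] pl_psi[of P a2] pl_psi[of P a3] unfolding oo_def lam_def by simp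
lemma oo1: "0 \<le> P \<Longrightarrow> oo 1 P = (-P + psi a1 P - psi a2 P - psi a3 P)/2"
  using pl_psi[of P a1] pl_psi[of P a2] pl_psi[of P a3] unfolding oo_def lam_def by simp
lemma oo2: "0 \<le> P \<Longrightarrow> oo 2 P = (-P - psi a1 P - psi a2 P + psi a3 P)/2"
  using pl_psi[of P a1] pl_psi[of P a2] pl_psi[of P a3] unfolding oo_def lam_def by simp

lemma Th_at0: "Th k 0 m = 0"
  unfolding Th_def oo_def kap_def psi_def by simp


definition wv :: "int \<Rightarrow> int" where "wv m = (if even m then 0 else -1)"

lemma chain:
  assumes "0 \<le> x" "x \<le> y"
  shows "-(y-x) \<le> psi a1 y - psi a1 x" "psi a1 y - psi a1 x \<le> psi a2 y - psi a2 x"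
        "psi a2 y - psi a2 x \<le> psi a3 y - psi a3 x" "psi a3 y - psi a3 x \<le> y - x"
  using psi_bnd[OF assms, of a1] psi_bnd[OF assms, of a3] psi_mono[OF assms, of a2 a1]
    psi_mono[OF assms, of a3 a2] a12 a23 by auto

lemma Th_expand:
  assumes "0 \<le> P" "k \<le> 2"
  shows "Th k P m = of_int m * (if k = 0 then (-P - psi a1 P + psi a2 P - psi a3 P)/2
     else if k = 1 then (-P + psi a1 P - psi a2 P - psi a3 P)/2
     else (-P - psi a1 P - psi a2 P + psi a3 P)/2) - P * (of_int m)^2/2
     + (if k = 1 then psi a1 P else psi a2 P)"
proof -
  have "k = 0 \<or> k = 1 \<or> k = 2" using assms by auto
  then show ?thesis
  using assms oo0 oo1 oo2 unfolding Th_def kap_def cst_def by auto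
qed

lemma oo_incr:
  assumes "0 \<le> x" "x \<le> y" "k \<le> 2"
  shows "-2*(y-x) \<le> oo k y - oo k x \<and> oo k y - oo k x \<le> y - x"
proof -
  have c: "-(y-x) \<le> psi a1 y - psi a1 x" "psi a1 y - psi a1 x \<le> psi a2 y - psi a2 x"
        "psi a2 y - psi a2 x \<le> psi a3 y - psi a3 x" "psi a3 y - psi a3 x \<le> y - x"
    using chain[OF assms(1,2)] by auto
  have "k = 0 \<or> k = 1 \<or> k = 2" using assms by auto
  then show ?thesis
    using c oo0[of x] oo0[of y] oo1[of x] oo1[of y] oo2[of x] oo2[of y] assms by auto
qed

lemma M_base:
  assumes "0 \<le> x" "x \<le> y" "k \<le> 2" "m \<in> {-2,-1,0,1}"
  shows "Th k y m - Th k x m \<le> Th 0 y (wv m) - Th 0 x (wv m)"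
proof -
  have c: "-(y-x) \<le> psi a1 y - psi a1 x" "psi a1 y - psi a1 x \<le> psi a2 y - psi a2 x"
        "psi a2 y - psi a2 x \<le> psi a3 y - psi a3 x" "psi a3 y - psi a3 x \<le> y - x"
    using chain[OF assms(1,2)] by auto
  have y0: "0 \<le> y" using assms by auto
  have k: "k = 0 \<or> k = 1 \<or> k = 2" using assms by auto
  have w: "wv (-2) = 0" "wv (-1) = -1" "wv 0 = 0" "wv 1 = -1" by (auto simp: wv_def)
  have mm: "m = -2 \<or> m = -1 \<or> m = 0 \<or> m = 1" using assms(4) by auto
  from k mm show ?thesis
    apply (elim disjE)
    apply (simp_all add: w Th_expand[OF assms(1)] Th_expand[OF y0] power2_eq_square field_simps)
    apply (use c in linarith)+
    done
qed

lemma Th_diff2: "(Th k y m - Th k x m) - (Th k y (m-2) - Th k x (m-2))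
   = 2*(oo k y - oo k x) - (y - x) * (2 * of_int m - 2)"
  unfolding Th_def by (simp add: power2_eq_square field_simps)

lemma Th_diff2': "(Th k y m - Th k x m) - (Th k y (m+2) - Th k x (m+2))
   = -2*(oo k y - oo k x) + (y - x) * (2 * of_int m + 2)"
  unfolding Th_def by (simp add: power2_eq_square field_simps)

lemma wv2: "wv (m - 2) = wv m" "wv (m + 2) = wv m" unfolding wv_def by auto

lemma M_all:
  assumes "0 \<le> x" "x \<le> y" "k \<le> 2"
  shows "Th k y m - Th k x m \<le> Th 0 y (wv m) - Th 0 x (wv m)"
proof (induction "nat \<bar>m\<bar>" arbitrary: m rule: less_induct)
  case less
  have oi: "-2*(y-x) \<le> oo k y - oo k x" "oo k y - oo k x \<le> y - x" using oo_incr[OF assms] by auto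
  show ?case
  proof (cases "m \<in> {-2,-1,0,1}")
    case True then show ?thesis using M_base[OF assms] by blast
  next
    case False
    then have "m \<ge> 2 \<or> m \<le> -3" by auto
    then show ?thesis
    proof
      assume m: "m \<ge> 2"
      have "nat \<bar>m - 2\<bar> < nat \<bar>m\<bar>" using m by auto
      then have ih: "Th k y (m-2) - Th k x (m-2) \<le> Th 0 y (wv m) - Th 0 x (wv m)"
        using less wv2 by metis
      have "(y - x) * (2 * of_int m - 4) \<ge> 0" using m assms by (intro mult_nonneg_nonneg) auto
      then show ?thesis using ih Th_diff2[of k y m x] oi by (simp add: algebra_simps)
    next
      assume m: "m \<le> -3"
      have "nat \<bar>m + 2\<bar> < nat \<bar>m\<bar>" using m by auto
      then have ih: "Th k y (m+2) - Th k x (m+2) \<le> Th 0 y (wv m) - Th 0 x (wv m)"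
        using less wv2 by metis
      have "(y - x) * (- 2 * of_int m - 6) \<ge> 0" using m assms by (intro mult_nonneg_nonneg) auto
      then show ?thesis using ih Th_diff2'[of k y m x] oi by (simp add: algebra_simps)
    qed
  qed
qed

definition Ok1 :: "real \<Rightarrow> real \<Rightarrow> bool" where
  "Ok1 x y \<longleftrightarrow> (psi a1 y - psi a1 x = psi a2 y - psi a2 x) \<or> (psi a3 y - psi a3 x = y - x)"
definition Ok3 :: "real \<Rightarrow> real \<Rightarrow> bool" where
  "Ok3 x y \<longleftrightarrow> (psi a1 y - psi a1 x = -(y - x)) \<or> (psi a2 y - psi a2 x = psi a3 y - psi a3 x)"
definition Safe1 :: "real \<Rightarrow> bool" where
  "Safe1 Q \<longleftrightarrow> (\<forall>x y. 0 \<le> x \<longrightarrow> x \<le> y \<longrightarrow> y \<le> Q \<longrightarrow> Ok1 x y)"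
definition Safe3 :: "real \<Rightarrow> bool" where
  "Safe3 Q \<longleftrightarrow> (\<forall>x y. 0 \<le> x \<longrightarrow> x \<le> y \<longrightarrow> y \<le> Q \<longrightarrow> Ok3 x y)"

lemma E1a: "0 \<le> x \<Longrightarrow> 0 \<le> y \<Longrightarrow> Th 1 y (-1) - Th 1 x (-1) = Th 0 y (-1) - Th 0 x (-1)"
  using Th_expand[of x 1 "-1"] Th_expand[of y 1 "-1"] Th_expand[of x 0 "-1"] Th_expand[of y 0 "-1"]
  by (simp add: field_simps)

lemma E3a: "Th 2 y 0 - Th 2 x 0 = Th 0 y 0 - Th 0 x 0"
  unfolding Th_def kap_def cst_def by simp

lemma Ok1E: assumes "0 \<le> x" "0 \<le> y" "Ok1 x y"
  shows "\<exists>v. (v = 0 \<or> v = -2) \<and> Th 1 y v - Th 1 x v = Th 0 y 0 - Th 0 x 0"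
proof -
  have e: "Th 1 y 0 - Th 1 x 0 - (Th 0 y 0 - Th 0 x 0) = (psi a1 y - psi a1 x) - (psi a2 y - psi a2 x)"
     "Th 1 y (-2) - Th 1 x (-2) - (Th 0 y 0 - Th 0 x 0) = (psi a3 y - psi a3 x) - (y - x)"
    using Th_expand[OF assms(1), of 1 0] Th_expand[OF assms(2), of 1 0] Th_expand[OF assms(1), of 0 0]
      Th_expand[OF assms(2), of 0 0]
      Th_expand[OF assms(1), of 1 "-2"] Th_expand[OF assms(2), of 1 "-2"]
     by (simp_all add: field_simps power2_eq_square)
  show ?thesis using assms(3) unfolding Ok1_def
  proof
    assume "psi a1 y - psi a1 x = psi a2 y - psi a2 x"
    then show ?thesis using e(1) by (intro exI[of _ 0]) auto
  next
    assume "psi a3 y - psi a3 x = y - x"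
    then show ?thesis using e(2) by (intro exI[of _ "-2"]) auto
  qed
qed

lemma Ok3E: assumes "0 \<le> x" "0 \<le> y" "Ok3 x y"
  shows "\<exists>v. (v = 1 \<or> v = -1) \<and> Th 2 y v - Th 2 x v = Th 0 y (-1) - Th 0 x (-1)"
proof -
  have e: "Th 2 y 1 - Th 2 x 1 - (Th 0 y (-1) - Th 0 x (-1)) = -(y - x) - (psi a1 y - psi a1 x)"
     "Th 2 y (-1) - Th 2 x (-1) - (Th 0 y (-1) - Th 0 x (-1)) = (psi a2 y - psi a2 x) - (psi a3 y - psi a3 x)"
    using Th_expand[OF assms(1), of 2 1] Th_expand[OF assms(2), of 2 1] Th_expand[OF assms(1), of 0 "-1"]
      Th_expand[OF assms(2), of 0 "-1"]
      Th_expand[OF assms(1), of 2 "-1"] Th_expand[OF assms(2), of 2 "-1"]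
    by (simp_all add: field_simps power2_eq_square)
  show ?thesis using assms(3) unfolding Ok3_def
  proof
    assume "psi a1 y - psi a1 x = -(y - x)"
    then show ?thesis using e(1) by (intro exI[of _ 1]) auto
  next
    assume "psi a2 y - psi a2 x = psi a3 y - psi a3 x"
    then show ?thesis using e(2) by (intro exI[of _ "-1"]) auto
  qed
qed

lemma Th0m: "Th k Q 0 = psi (cst k) Q" unfolding Th_def kap_def by simp

lemma base_ineq: "0 \<le> Q \<Longrightarrow> k \<le> 2 \<Longrightarrow> - cst k - Th k Q 0 \<le> - cst 0 - Th 0 Q 0"
proof (cases "k = 1")
  case True
  then show ?thesis unfolding Th0m cst_def using a12 unfolding psi_def by simp
next
  case False
  then show ?thesis unfolding Th0m cst_def by simp
qed

lemma G1': assumes "0 \<le> Q" "Q \<le> P0" "\<not> Ok1 Q P0" shows "Safe3 Q"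
  unfolding Safe3_def Ok3_def
proof (intro allI impI)
  fix x y assume xy: "0 \<le> x" "x \<le> y" "y \<le> Q"
  have QP: "Q < P0" using assms unfolding Ok1_def by (cases "Q = P0") auto
  show "psi a1 y - psi a1 x = - (y - x) \<or> psi a2 y - psi a2 x = psi a3 y - psi a3 x"
  proof (cases "x = y")
    case False
    then show ?thesis using xy QP assms(3) a12 a23 unfolding Ok1_def psi_def by (smt (z3))
  qed auto
qed

lemma G2': assumes "0 \<le> Q" "Q \<le> P0" "\<not> Ok3 Q P0" shows "Safe1 Q"
  unfolding Safe1_def Ok1_def
proof (intro allI impI)
  fix x y assume xy: "0 \<le> x" "x \<le> y" "y \<le> Q"
  have QP: "Q < P0" using assms unfolding Ok3_def by (cases "Q = P0") auto
  show "psi a1 y - psi a1 x = psi a2 y - psi a2 x \<or> psi a3 y - psi a3 x = y - x"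
  proof (cases "x = y")
    case False
    then show ?thesis using xy QP assms(3) a12 a23 unfolding Ok3_def psi_def by (smt (z3))
  qed auto
qed

lemma G0': assumes "0 \<le> Q" "\<not> (- cst 1 - Th 1 Q 0 = - cst 0 - Th 0 Q 0)" shows "Safe3 Q"
  unfolding Safe3_def Ok3_def
proof (intro allI impI)
  fix x y assume xy: "0 \<le> x" "x \<le> y" "y \<le> Q"
  show "psi a1 y - psi a1 x = - (y - x) \<or> psi a2 y - psi a2 x = psi a3 y - psi a3 x"
  proof (cases "x = y")
    case False
    then show ?thesis using xy assms(2) a12 a23 unfolding Th0m cst_def psi_def by (smt (z3))
  qed auto
qed

lemma Ok1_triv: "Ok1 x x" unfolding Ok1_def by simp
lemma Ok3_triv: "Ok3 x x" unfolding Ok3_def by simp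

definition SG :: "nat set \<Rightarrow> (nat \<Rightarrow> int) set" where
  "SG D = {s. \<forall>i\<in>D. s i = 1 \<or> s i = -1}"
definition msum :: "nat set \<Rightarrow> (nat \<Rightarrow> int) \<Rightarrow> int" where
  "msum D s = (\<Sum>i\<in>D. s i)"
definition PSd :: "nat set \<Rightarrow> (nat \<Rightarrow> real) \<Rightarrow> real" where
  "PSd D x = (\<Sum>i\<in>D. \<Sum>j\<in>D. \<bar>x i - x j\<bar>) / 2"
definition V :: "nat \<Rightarrow> nat set \<Rightarrow> (nat \<Rightarrow> real) \<Rightarrow> (nat \<Rightarrow> int) \<Rightarrow> real" where
  "V k D P s = PSd D (\<lambda>i. of_int (s i) * P i) + (\<Sum>i\<in>D. lam k (of_int (s i) * P i)) - cst k"
definition ww :: "nat \<Rightarrow> int" where "ww n = (if even n then 0 else -1)"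

lemma msum_parity: "finite D \<Longrightarrow> s \<in> SG D \<Longrightarrow> wv (msum D s) = ww (card D)"
proof (induction D rule: finite_induct)
  case empty then show ?case by (simp add: msum_def wv_def ww_def)
next
  case (insert i D)
  have sD: "s \<in> SG D" using insert.prems unfolding SG_def by auto
  have si: "s i = 1 \<or> s i = -1" using insert.prems unfolding SG_def by auto
  have "msum (insert i D) s = s i + msum D s" using insert.hyps by (simp add: msum_def)
  then show ?case using insert.IH[OF sD] insert.hyps si unfolding wv_def ww_def
    by (auto split: if_splits)
qed

lemma V_cong: "\<forall>i\<in>D. s i = t i \<Longrightarrow> V k D P s = V k D P t"
  unfolding V_def PSd_def by (simp cong: sum.cong)

lemma msum_cong: "\<forall>i\<in>D. s i = t i \<Longrightarrow> msum D s = msum D t"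
  unfolding msum_def by (simp cong: sum.cong)

lemma ev_neg: "ev (-q) = ev q" unfolding ev_def by simp

lemma abs_step: fixes P0 Pj :: real assumes "0 \<le> P0" "P0 \<le> Pj" "s0 = 1 \<or> s0 = -1" "sj = 1 \<or> sj = -1"
  shows "\<bar>of_int s0 * P0 - of_int sj * Pj\<bar> = Pj - of_int s0 * of_int sj * P0"
  using assms by (auto simp: abs_if)

lemma PSd_insert: assumes "finite D" "i0 \<notin> D"
  shows "PSd (insert i0 D) x = PSd D x + (\<Sum>j\<in>D. \<bar>x i0 - x j\<bar>)"
proof -
  have "(\<Sum>i\<in>insert i0 D. \<Sum>j\<in>insert i0 D. \<bar>x i - x j\<bar>)
      = (\<Sum>j\<in>insert i0 D. \<bar>x i0 - x j\<bar>) + (\<Sum>i\<in>D. \<Sum>j\<in>insert i0 D. \<bar>x i - x j\<bar>)"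
    using assms by simp
  also have "\<dots> = (\<Sum>j\<in>D. \<bar>x i0 - x j\<bar>) + (\<Sum>i\<in>D. \<bar>x i - x i0\<bar> + (\<Sum>j\<in>D. \<bar>x i - x j\<bar>))"
    using assms by simp
  also have "\<dots> = 2 * (\<Sum>j\<in>D. \<bar>x i0 - x j\<bar>) + (\<Sum>i\<in>D. \<Sum>j\<in>D. \<bar>x i - x j\<bar>)"
    by (simp add: sum.distrib abs_minus_commute)
  finally show ?thesis unfolding PSd_def by simp
qed

lemma V_step:
  assumes fin: "finite D" and i0: "i0 \<notin> D" and P0: "0 \<le> P i0" and mn: "\<forall>j\<in>D. P i0 \<le> P j"
    and s: "s \<in> SG (insert i0 D)"
  shows "V k (insert i0 D) P s = V k D P s + (\<Sum>j\<in>D. P j) + P i0 / 2 + ev (P i0)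
           + Th k (P i0) (msum D s + s i0) - Th k (P i0) (msum D s)"
proof -
  have si0: "s i0 = 1 \<or> s i0 = -1" using s unfolding SG_def by auto
  have sj: "\<forall>j\<in>D. s j = 1 \<or> s j = -1" using s unfolding SG_def by auto
  have "(\<Sum>j\<in>D. \<bar>of_int (s i0) * P i0 - of_int (s j) * P j\<bar>)
      = (\<Sum>j\<in>D. P j - of_int (s i0) * of_int (s j) * P i0)"
    using abs_step[OF P0 _ si0] mn sj by (intro sum.cong) auto
  also have "\<dots> = (\<Sum>j\<in>D. P j) - of_int (s i0) * P i0 * of_int (msum D s)"
    unfolding msum_def by (simp add: sum_subtractf sum_distrib_left sum_distrib_right algebra_simps)
  finally have ps: "(\<Sum>j\<in>D. \<bar>of_int (s i0) * P i0 - of_int (s j) * P j\<bar>)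
     = (\<Sum>j\<in>D. P j) - of_int (s i0) * P i0 * of_int (msum D s)" .
  have lam0: "lam k (of_int (s i0) * P i0) = ev (P i0) + of_int (s i0) * oo k (P i0)"
    using si0 lam_split[of k] ev_neg oo_neg by auto
  have th: "Th k (P i0) (msum D s + s i0) - Th k (P i0) (msum D s)
     = of_int (s i0) * oo k (P i0) - P i0 / 2 - of_int (s i0) * P i0 * of_int (msum D s)"
  proof -
    have sq: "(of_int (s i0) :: real)^2 = 1" using si0 by auto
    show ?thesis unfolding Th_def using sq by (simp add: power2_eq_square field_simps)
  qed
  have "V k (insert i0 D) P s = PSd D (\<lambda>i. of_int (s i) * P i)
       + (\<Sum>j\<in>D. \<bar>of_int (s i0) * P i0 - of_int (s j) * P j\<bar>)
       + (lam k (of_int (s i0) * P i0) + (\<Sum>i\<in>D. lam k (of_int (s i) * P i))) - cst k"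
    unfolding V_def PSd_insert[OF fin i0] using fin i0 by simp
  then show ?thesis using ps lam0 th unfolding V_def by linarith
qed

definition Good1 :: "nat set \<Rightarrow> (nat \<Rightarrow> real) \<Rightarrow> (nat \<Rightarrow> int) \<Rightarrow> real \<Rightarrow> bool" where
  "Good1 D P s0 Q \<longleftrightarrow> (\<exists>s\<in>SG D. (if even (card D) then msum D s = 0 \<or> msum D s = -2 else msum D s = -1)
      \<and> V 1 D P s - Th 1 Q (msum D s) = V 0 D P s0 - Th 0 Q (ww (card D)))"
definition Good3 :: "nat set \<Rightarrow> (nat \<Rightarrow> real) \<Rightarrow> (nat \<Rightarrow> int) \<Rightarrow> real \<Rightarrow> bool" where
  "Good3 D P s0 Q \<longleftrightarrow> (\<exists>s\<in>SG D. (if even (card D) then msum D s = 0 else msum D s = 1 \<or> msum D s = -1)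
      \<and> V 2 D P s - Th 2 Q (msum D s) = V 0 D P s0 - Th 0 Q (ww (card D)))"
definition Inv :: "nat set \<Rightarrow> (nat \<Rightarrow> real) \<Rightarrow> bool" where
  "Inv D P \<longleftrightarrow> (\<exists>s0\<in>SG D. msum D s0 = ww (card D) \<and>
     (\<forall>Q. 0 \<le> Q \<and> (\<forall>i\<in>D. Q \<le> P i) \<longrightarrow>
        (\<forall>s\<in>SG D. \<forall>k\<le>2. V k D P s - Th k Q (msum D s) \<le> V 0 D P s0 - Th 0 Q (ww (card D)))
      \<and> ((Good1 D P s0 Q \<and> Good3 D P s0 Q) \<or> (Good1 D P s0 Q \<and> Safe1 Q) \<or> (Good3 D P s0 Q \<and> Safe3 Q))))"

lemma Inv_empty: "Inv {} P"
proof -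
  let ?s0 = "\<lambda>_::nat. (1::int)"
  have sg: "?s0 \<in> SG {}" by (simp add: SG_def)
  have V0: "V k {} P s = - cst k" for k s by (simp add: V_def PSd_def)
  have ms: "msum {} s = 0" for s by (simp add: msum_def)
  have w0: "ww 0 = 0" by (simp add: ww_def)
  have c20: "cst 2 = cst 0" by (simp add: cst_def)
  { fix Q :: real assume Q: "0 \<le> Q"
    have A: "\<forall>s\<in>SG {}. \<forall>k\<le>2. V k {} P s - Th k Q (msum {} s) \<le> V 0 {} P ?s0 - Th 0 Q (ww (card {}))"
      using base_ineq[OF Q] by (simp add: V0 ms w0)
    have g3: "Good3 {} P ?s0 Q" unfolding Good3_def using sg
      by (intro bexI[of _ ?s0]) (auto simp: V0 ms w0 Th0m c20)
    have "(Good1 {} P ?s0 Q \<and> Good3 {} P ?s0 Q) \<or> (Good3 {} P ?s0 Q \<and> Safe3 Q)"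
    proof (cases "- cst 1 - Th 1 Q 0 = - cst 0 - Th 0 Q 0")
      case True
      then have "Good1 {} P ?s0 Q" unfolding Good1_def using sg
        by (intro bexI[of _ ?s0]) (auto simp: V0 ms w0)
      then show ?thesis using g3 by blast
    next
      case False
      then show ?thesis using G0'[OF Q False] g3 by blast
    qed
    note A this }
  then show ?thesis unfolding Inv_def using sg by (intro bexI[of _ ?s0]) (auto simp: ms w0)
qed

lemma ext_facts:
  assumes fin: "finite D" and i0: "i0 \<notin> D" and P0: "0 \<le> P i0" and mn: "\<forall>j\<in>D. P i0 \<le> P j"
    and s: "s \<in> SG D" and t: "t = 1 \<or> t = -1"
  shows "s(i0 := t) \<in> SG (insert i0 D)"
    "msum (insert i0 D) (s(i0 := t)) = msum D s + t"
    "V k (insert i0 D) P (s(i0 := t)) = V k D P s + ((\<Sum>j\<in>D. P j) + P i0 / 2 + ev (P i0))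
           + Th k (P i0) (msum D s + t) - Th k (P i0) (msum D s)"
proof -
  show sg: "s(i0 := t) \<in> SG (insert i0 D)" using s t unfolding SG_def by auto
  have c: "\<forall>i\<in>D. (s(i0 := t)) i = s i" using i0 by auto
  show "msum (insert i0 D) (s(i0 := t)) = msum D s + t"
    using fin i0 msum_cong[OF c] by (simp add: msum_def)
  have "msum D (s(i0 := t)) = msum D s" using msum_cong[OF c] .
  then show "V k (insert i0 D) P (s(i0 := t)) = V k D P s + ((\<Sum>j\<in>D. P j) + P i0 / 2 + ev (P i0))
           + Th k (P i0) (msum D s + t) - Th k (P i0) (msum D s)"
    using V_step[OF fin i0 P0 mn sg, of k] V_cong[OF c, of k P] by simp
qed

lemma Inv_insert:
  assumes fin: "finite D" and i0: "i0 \<notin> D" and P0: "0 \<le> P i0" and mn: "\<forall>j\<in>D. P i0 \<le> P j"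
    and IH: "Inv D P"
  shows "Inv (insert i0 D) P"
proof -
  obtain s0 where s0: "s0 \<in> SG D" and ms0: "msum D s0 = ww (card D)"
    and H: "\<And>Q. 0 \<le> Q \<Longrightarrow> (\<forall>i\<in>D. Q \<le> P i) \<Longrightarrow>
        (\<forall>s\<in>SG D. \<forall>k\<le>2. V k D P s - Th k Q (msum D s) \<le> V 0 D P s0 - Th 0 Q (ww (card D)))
      \<and> ((Good1 D P s0 Q \<and> Good3 D P s0 Q) \<or> (Good1 D P s0 Q \<and> Safe1 Q) \<or> (Good3 D P s0 Q \<and> Safe3 Q))"
    using IH unfolding Inv_def by blast
  define n where "n = card D"
  have cardI: "card (insert i0 D) = Suc n" using fin i0 n_def by simp
  define K where "K = (\<Sum>j\<in>D. P j) + P i0 / 2 + ev (P i0)"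
  define t0 where "t0 = ww (Suc n) - ww n"
  have t0: "t0 = 1 \<or> t0 = -1" unfolding t0_def ww_def by auto
  define s0' where "s0' = s0(i0 := t0)"
  note ef0 = ext_facts[OF fin i0 P0 mn s0 t0]
  have s0': "s0' \<in> SG (insert i0 D)" using ef0 s0'_def by simp
  have ms0': "msum (insert i0 D) s0' = ww (Suc n)" using ef0 s0'_def ms0 n_def t0_def by simp
  have V0': "V 0 (insert i0 D) P s0' = V 0 D P s0 + K + Th 0 (P i0) (ww (Suc n)) - Th 0 (P i0) (ww n)"
    using ef0(3)[of 0] s0'_def ms0 n_def t0_def K_def by simp
  have HP: "(\<forall>s\<in>SG D. \<forall>k\<le>2. V k D P s - Th k (P i0) (msum D s) \<le> V 0 D P s0 - Th 0 (P i0) (ww n))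
      \<and> ((Good1 D P s0 (P i0) \<and> Good3 D P s0 (P i0)) \<or> (Good1 D P s0 (P i0) \<and> Safe1 (P i0))
         \<or> (Good3 D P s0 (P i0) \<and> Safe3 (P i0)))"
    using H[OF P0 mn] n_def by simp
  have main: "(\<forall>s\<in>SG (insert i0 D). \<forall>k\<le>2. V k (insert i0 D) P s - Th k Q (msum (insert i0 D) s)
          \<le> V 0 (insert i0 D) P s0' - Th 0 Q (ww (card (insert i0 D))))
      \<and> ((Good1 (insert i0 D) P s0' Q \<and> Good3 (insert i0 D) P s0' Q) \<or> (Good1 (insert i0 D) P s0' Q \<and> Safe1 Q)
          \<or> (Good3 (insert i0 D) P s0' Q \<and> Safe3 Q))"
    if Q: "0 \<le> Q" "\<forall>i\<in>insert i0 D. Q \<le> P i" for Q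
  proof -
    have QP: "Q \<le> P i0" using Q by auto
    have A: "\<forall>s\<in>SG (insert i0 D). \<forall>k\<le>2. V k (insert i0 D) P s - Th k Q (msum (insert i0 D) s)
          \<le> V 0 (insert i0 D) P s0' - Th 0 Q (ww (card (insert i0 D)))"
    proof (intro ballI allI impI)
      fix s k assume s: "s \<in> SG (insert i0 D)" and k: "k \<le> (2::nat)"
      have sD: "s \<in> SG D" using s unfolding SG_def by auto
      have ms: "msum (insert i0 D) s = msum D s + s i0" using fin i0 by (simp add: msum_def)
      have vs: "V k (insert i0 D) P s = V k D P s + K + Th k (P i0) (msum D s + s i0) - Th k (P i0) (msum D s)"
        using V_step[OF fin i0 P0 mn s, of k] K_def by simp
      have ih: "V k D P s - Th k (P i0) (msum D s) \<le> V 0 D P s0 - Th 0 (P i0) (ww n)"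
        using HP sD k by blast
      have par: "wv (msum (insert i0 D) s) = ww (Suc n)" using msum_parity[OF _ s] fin cardI by simp
      have M: "Th k (P i0) (msum D s + s i0) - Th k Q (msum D s + s i0)
          \<le> Th 0 (P i0) (ww (Suc n)) - Th 0 Q (ww (Suc n))"
        using M_all[OF Q(1) QP k, of "msum D s + s i0"] par ms by simp
      show "V k (insert i0 D) P s - Th k Q (msum (insert i0 D) s)
          \<le> V 0 (insert i0 D) P s0' - Th 0 Q (ww (card (insert i0 D)))"
        using vs ih M V0' ms cardI by simp
    qed
    have E1: "Th 1 (P i0) (-1) - Th 1 Q (-1) = Th 0 (P i0) (-1) - Th 0 Q (-1)" using E1a Q(1) P0 by blast
    have E3: "Th 2 (P i0) 0 - Th 2 Q 0 = Th 0 (P i0) 0 - Th 0 Q 0" using E3a by blast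
    have T1: "Good1 (insert i0 D) P s0' Q"
      if g: "Good1 D P s0 (P i0)" and c: "odd (Suc n) \<or> Ok1 Q (P i0)"
    proof -
      obtain s where s: "s \<in> SG D" and cond: "(if even n then msum D s = 0 \<or> msum D s = -2 else msum D s = -1)"
        and eq: "V 1 D P s - Th 1 (P i0) (msum D s) = V 0 D P s0 - Th 0 (P i0) (ww n)"
        using g unfolding Good1_def n_def by blast
      show ?thesis
      proof (cases "even n")
        case True
        define t where "t = -1 - msum D s"
        have t: "t = 1 \<or> t = -1" using True cond t_def by auto
        note ef = ext_facts[OF fin i0 P0 mn s t]
        have mt: "msum D s + t = -1" using t_def by simp
        have ww1: "ww (Suc n) = -1" "ww n = ww n" using True by (auto simp: ww_def)
        show ?thesis unfolding Good1_def
          apply (rule bexI[of _ "s(i0 := t)"])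
          using ef(2) ef(3)[of 1] mt ww1 cardI True V0' E1 eq K_def by (auto simp: ef(1))
      next
        case False
        then have ok: "Ok1 Q (P i0)" using c by auto
        obtain v where v: "v = 0 \<or> v = -2" and ev1: "Th 1 (P i0) v - Th 1 Q v = Th 0 (P i0) 0 - Th 0 Q 0"
          using Ok1E[OF Q(1) P0 ok] by blast
        define t where "t = v + 1"
        have ms: "msum D s = -1" using False cond by simp
        have t: "t = 1 \<or> t = -1" using v t_def by auto
        note ef = ext_facts[OF fin i0 P0 mn s t]
        have mt: "msum D s + t = v" using t_def ms by simp
        have ww1: "ww (Suc n) = 0" using False by (auto simp: ww_def)
        show ?thesis unfolding Good1_def
          apply (rule bexI[of _ "s(i0 := t)"])
          using ef(2) ef(3)[of 1] mt ww1 cardI False V0' ev1 eq K_def v by (auto simp: ef(1))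
      qed
    qed
    have T3: "Good3 (insert i0 D) P s0' Q"
      if g: "Good3 D P s0 (P i0)" and c: "even (Suc n) \<or> Ok3 Q (P i0)"
    proof -
      obtain s where s: "s \<in> SG D" and cond: "(if even n then msum D s = 0 else msum D s = 1 \<or> msum D s = -1)"
        and eq: "V 2 D P s - Th 2 (P i0) (msum D s) = V 0 D P s0 - Th 0 (P i0) (ww n)"
        using g unfolding Good3_def n_def by blast
      show ?thesis
      proof (cases "even n")
        case False
        define t where "t = - msum D s"
        have t: "t = 1 \<or> t = -1" using False cond t_def by auto
        note ef = ext_facts[OF fin i0 P0 mn s t]
        have mt: "msum D s + t = 0" using t_def by simp
        have ww1: "ww (Suc n) = 0" using False by (auto simp: ww_def)
        show ?thesis unfolding Good3_def
          apply (rule bexI[of _ "s(i0 := t)"])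
          using ef(2) ef(3)[of 2] mt ww1 cardI False V0' E3 eq K_def by (auto simp: ef(1))
      next
        case True
        then have ok: "Ok3 Q (P i0)" using c by auto
        obtain v where v: "v = 1 \<or> v = -1" and ev1: "Th 2 (P i0) v - Th 2 Q v = Th 0 (P i0) (-1) - Th 0 Q (-1)"
          using Ok3E[OF Q(1) P0 ok] by blast
        define t where "t = v"
        have ms: "msum D s = 0" using True cond by simp
        have t: "t = 1 \<or> t = -1" using v t_def by auto
        note ef = ext_facts[OF fin i0 P0 mn s t]
        have mt: "msum D s + t = v" using t_def ms by simp
        have ww1: "ww (Suc n) = -1" using True by (auto simp: ww_def)
        show ?thesis unfolding Good3_def
          apply (rule bexI[of _ "s(i0 := t)"])
          using ef(2) ef(3)[of 2] mt ww1 cardI True V0' ev1 eq K_def v by (auto simp: ef(1))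
      qed
    qed
    have S1: "Ok1 Q (P i0) \<and> Safe1 Q" if "Safe1 (P i0)" using that Q(1) QP unfolding Safe1_def by auto
    have S3: "Ok3 Q (P i0) \<and> Safe3 Q" if "Safe3 (P i0)" using that Q(1) QP unfolding Safe3_def by auto
    have B: "(Good1 (insert i0 D) P s0' Q \<and> Good3 (insert i0 D) P s0' Q) \<or> (Good1 (insert i0 D) P s0' Q \<and> Safe1 Q)
          \<or> (Good3 (insert i0 D) P s0' Q \<and> Safe3 Q)"
      using HP
    proof (elim conjE disjE)
      assume g1: "Good1 D P s0 (P i0)" and g3: "Good3 D P s0 (P i0)"
      show ?thesis
      proof (cases "(odd (Suc n) \<or> Ok1 Q (P i0)) \<and> (even (Suc n) \<or> Ok3 Q (P i0))")
        case True then show ?thesis using T1[OF g1] T3[OF g3] by blast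
      next
        case False
        then consider "\<not> (odd (Suc n) \<or> Ok1 Q (P i0))" | "\<not> (even (Suc n) \<or> Ok3 Q (P i0))" by blast
        then show ?thesis
        proof cases
          case 1
          then have "Safe3 Q" using G1'[OF Q(1) QP] by blast
          then show ?thesis using T3[OF g3] 1 by blast
        next
          case 2
          then have "Safe1 Q" using G2'[OF Q(1) QP] by blast
          then show ?thesis using T1[OF g1] 2 by blast
        qed
      qed
    next
      assume "Good1 D P s0 (P i0)" "Safe1 (P i0)"
      then show ?thesis using T1 S1 by blast
    next
      assume "Good3 D P s0 (P i0)" "Safe3 (P i0)"
      then show ?thesis using T3 S3 by blast
    qed
    show ?thesis using A B by blast
  qed
  show ?thesis unfolding Inv_def using s0' ms0' cardI main by (intro bexI[of _ s0']) auto
qed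

lemma Inv_all: "finite D \<Longrightarrow> (\<forall>i\<in>D. 0 \<le> P i) \<Longrightarrow> Inv D P"
proof (induction "card D" arbitrary: D)
  case 0
  then have "D = {}" by auto
  then show ?case using Inv_empty by simp
next
  case (Suc n)
  then have ne: "D \<noteq> {}" by auto
  have "Min (P ` D) \<in> P ` D" using Min_in[of "P ` D"] Suc.prems ne by auto
  then obtain i0 where i0: "i0 \<in> D" "P i0 = Min (P ` D)" by (metis imageE)
  have mn: "\<forall>j\<in>D - {i0}. P i0 \<le> P j" using i0 Suc.prems by auto
  have D: "D = insert i0 (D - {i0})" using i0 by auto
  have IH: "Inv (D - {i0}) P" using Suc.hyps(1)[of "D - {i0}"] Suc.hyps(2) Suc.prems i0 by auto
  have "Inv (insert i0 (D - {i0})) P"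
    using Inv_insert[OF _ _ _ mn IH] Suc.prems i0 by auto
  then show ?case using D by simp
qed

lemma Dlemma:
  assumes "finite D" "\<forall>i\<in>D. 0 \<le> P i"
  shows "\<exists>s0\<in>SG D. (\<forall>s\<in>SG D. \<forall>k\<le>2. V k D P s \<le> V 0 D P s0)
          \<and> (\<exists>s\<in>SG D. V 1 D P s = V 0 D P s0 \<or> V 2 D P s = V 0 D P s0)"
proof -
  obtain s0 where s0: "s0 \<in> SG D" and H: "(\<forall>s\<in>SG D. \<forall>k\<le>2. V k D P s - Th k 0 (msum D s) \<le> V 0 D P s0 - Th 0 0 (ww (card D)))
      \<and> ((Good1 D P s0 0 \<and> Good3 D P s0 0) \<or> (Good1 D P s0 0 \<and> Safe1 0) \<or> (Good3 D P s0 0 \<and> Safe3 0))"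
    using Inv_all[OF assms] assms(2) unfolding Inv_def by fastforce
  have "\<exists>s\<in>SG D. V 1 D P s = V 0 D P s0 \<or> V 2 D P s = V 0 D P s0"
    using H unfolding Good1_def Good3_def Th_at0 by auto
  then show ?thesis using s0 H unfolding Th_at0 by auto
qed

end


definition PSo :: "nat set \<Rightarrow> (nat \<Rightarrow> real) \<Rightarrow> real" where
  "PSo I q = (\<Sum>i\<in>I. \<Sum>j\<in>I. if j < i then max (q i) (q j) else 0)"

lemma pair_orient:
  fixes q :: "nat \<Rightarrow> real"
  assumes fin: "finite I" and irr: "\<And>i. \<not> R i i"
    and tot: "\<And>i j. i \<in> I \<Longrightarrow> j \<in> I \<Longrightarrow> i \<noteq> j \<Longrightarrow> R j i \<longleftrightarrow> \<not> R i j"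
  shows "(\<Sum>i\<in>I. \<Sum>j\<in>I. if R j i then q i else 0)
       = (\<Sum>i\<in>I. \<Sum>j\<in>I. if j < i then (if R j i then q i else q j) else 0)"
proof -
  have "(\<Sum>i\<in>I. \<Sum>j\<in>I. if R j i then q i else 0)
      = (\<Sum>i\<in>I. \<Sum>j\<in>I. (if j < i \<and> R j i then q i else 0) + (if i < j \<and> R j i then q i else 0))"
  proof (intro sum.cong refl)
    fix i j show "(if R j i then q i else 0) = (if j < i \<and> R j i then q i else 0) + (if i < j \<and> R j i then q i else 0)"
      using irr[of i] by (cases i j rule: linorder_cases) auto
  qed
  also have "\<dots> = (\<Sum>i\<in>I. \<Sum>j\<in>I. if j < i \<and> R j i then q i else 0)
       + (\<Sum>i\<in>I. \<Sum>j\<in>I. if i < j \<and> R j i then q i else 0)"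
    by (simp add: sum.distrib)
  also have "(\<Sum>i\<in>I. \<Sum>j\<in>I. if i < j \<and> R j i then q i else 0)
      = (\<Sum>j\<in>I. \<Sum>i\<in>I. if i < j \<and> R j i then q i else 0)"
    by (rule sum.swap)
  also have "\<dots> = (\<Sum>i\<in>I. \<Sum>j\<in>I. if j < i \<and> \<not> R j i then q j else 0)"
  proof (intro sum.cong refl)
    fix a b assume ab: "a \<in> I" "b \<in> I"
    show "(if b < a \<and> R a b then q b else 0) = (if b < a \<and> \<not> R b a then q b else 0)"
    proof (cases "b < a")
      case True then have "b \<noteq> a" by simp
      then show ?thesis using tot[OF ab(2) ab(1)] True by simp
    qed simp
  qed
  finally show ?thesis
    by (simp add: sum.distrib[symmetric]) (intro sum.cong refl, auto)
qed

lemma sum_rank: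
  fixes q :: "nat \<Rightarrow> real"
  assumes fin: "finite I" and f: "\<And>i. i \<in> I \<Longrightarrow> f i = 1 + card {j\<in>I. R j i}"
  shows "(\<Sum>i\<in>I. q i * real (f i)) = (\<Sum>i\<in>I. q i) + (\<Sum>i\<in>I. \<Sum>j\<in>I. if R j i then q i else 0)"
proof -
  have "(\<Sum>j\<in>I. if R j i then q i else 0) = q i * real (card {j\<in>I. R j i})" for i
    using fin by (simp add: sum.inter_filter[symmetric])
  then show ?thesis using f by (simp add: sum.distrib algebra_simps)
qed

lemma perm_rank:
  assumes pi: "\<pi> permutes {1..N}" and i: "i \<in> {1..N}"
  shows "\<pi> i = 1 + card {j\<in>{1..N}. \<pi> j < \<pi> i}"
proof -
  have im: "\<pi> ` {j\<in>{1..N}. \<pi> j < \<pi> i} = {k\<in>{1..N}. k < \<pi> i}"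
  proof
    show "\<pi> ` {j\<in>{1..N}. \<pi> j < \<pi> i} \<subseteq> {k\<in>{1..N}. k < \<pi> i}"
    proof
      fix y assume "y \<in> \<pi> ` {j\<in>{1..N}. \<pi> j < \<pi> i}"
      then obtain j where j: "j \<in> {1..N}" "\<pi> j < \<pi> i" "y = \<pi> j" by blast
      have "\<pi> j \<in> {1..N}" using permutes_in_image[OF pi, of j] j(1) by simp
      then show "y \<in> {k\<in>{1..N}. k < \<pi> i}" using j by simp
    qed
    show "{k\<in>{1..N}. k < \<pi> i} \<subseteq> \<pi> ` {j\<in>{1..N}. \<pi> j < \<pi> i}"
    proof
      fix x assume x: "x \<in> {k\<in>{1..N}. k < \<pi> i}"
      then have "x \<in> \<pi> ` {1..N}" using permutes_image[OF pi] by simp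
      then obtain j where "j \<in> {1..N}" "x = \<pi> j" by blast
      then show "x \<in> \<pi> ` {j\<in>{1..N}. \<pi> j < \<pi> i}" using x by blast
    qed
  qed
  have "card {j\<in>{1..N}. \<pi> j < \<pi> i} = card {k\<in>{1..N}. k < \<pi> i}"
    using card_image[OF permutes_inj_on[OF pi], of "{j\<in>{1..N}. \<pi> j < \<pi> i}"] im
    by simp
  moreover have pin: "\<pi> i \<in> {1..N}" using permutes_in_image[OF pi, of i] i by simp
  moreover have "{k\<in>{1..N}. k < \<pi> i} = {1..<\<pi> i}" using pin by auto
  ultimately have c: "card {j\<in>{1..N}. \<pi> j < \<pi> i} = \<pi> i - 1" by simp
  have "1 \<le> \<pi> i" using pin by simp
  then show ?thesis unfolding c by simp
qed

lemma R1_ineq: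
  fixes q :: "nat \<Rightarrow> real"
  assumes pi: "\<pi> permutes {1..N}"
  shows "(\<Sum>i\<in>{1..N}. q i * real (\<pi> i)) \<le> (\<Sum>i\<in>{1..N}. q i) + PSo {1..N} q"
proof -
  let ?R = "\<lambda>j i. \<pi> j < \<pi> i"
  have tot: "?R j i \<longleftrightarrow> \<not> ?R i j" if "i \<in> {1..N}" "j \<in> {1..N}" "i \<noteq> j" for i j
  proof -
    have "\<pi> i \<noteq> \<pi> j" using permutes_inj[OF pi] that(3) by (auto dest: injD)
    then show ?thesis by auto
  qed
  have "(\<Sum>i\<in>{1..N}. q i * real (\<pi> i)) = (\<Sum>i\<in>{1..N}. q i) + (\<Sum>i\<in>{1..N}. \<Sum>j\<in>{1..N}. if ?R j i then q i else 0)"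
    by (intro sum_rank, simp, rule perm_rank[OF pi])
  also have "(\<Sum>i\<in>{1..N}. \<Sum>j\<in>{1..N}. if ?R j i then q i else 0)
      = (\<Sum>i\<in>{1..N}. \<Sum>j\<in>{1..N}. if j < i then (if ?R j i then q i else q j) else 0)"
    by (rule pair_orient[OF _ _ tot]) auto
  also have "\<dots> \<le> PSo {1..N} q" unfolding PSo_def
    by (intro sum_mono) auto
  finally show ?thesis by simp
qed

lemma R2_exists:
  fixes q :: "nat \<Rightarrow> real"
  shows "\<exists>\<pi>. \<pi> permutes {1..N} \<and> (\<Sum>i\<in>{1..N}. q i * real (\<pi> i)) = (\<Sum>i\<in>{1..N}. q i) + PSo {1..N} q"
proof -
  define I where "I = {1..N}"
  define R where "R j i \<longleftrightarrow> q j < q i \<or> (q j = q i \<and> j < i)" for j i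
  define r where "r i = (if i \<in> I then 1 + card {j\<in>I. R j i} else i)" for i
  have fin: "finite I" unfolding I_def by simp
  have irr: "\<not> R i i" for i unfolding R_def by simp
  have tot: "R j i \<longleftrightarrow> \<not> R i j" if "i \<in> I" "j \<in> I" "i \<noteq> j" for i j
    using that unfolding R_def by auto
  have trans: "R k i" if "R k j" "R j i" for i j k using that unfolding R_def by auto
  have sub: "r i \<in> I" if i: "i \<in> I" for i
  proof -
    have "{j\<in>I. R j i} \<subseteq> I - {i}" using irr by auto
    then have "card {j\<in>I. R j i} \<le> card (I - {i})" using fin by (intro card_mono) auto
    also have "\<dots> = N - 1" using i fin unfolding I_def by simp
    finally show ?thesis using i unfolding r_def I_def by auto
  qed
  have lt: "r j < r i" if "i \<in> I" "j \<in> I" "R j i" for i j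
  proof -
    have "{k\<in>I. R k j} \<subseteq> {k\<in>I. R k i}" using trans that by auto
    moreover have "j \<in> {k\<in>I. R k i}" "j \<notin> {k\<in>I. R k j}" using that irr by auto
    ultimately have "{k\<in>I. R k j} \<subset> {k\<in>I. R k i}" by blast
    then have "card {k\<in>I. R k j} < card {k\<in>I. R k i}" using fin by (intro psubset_card_mono) auto
    then show ?thesis using that unfolding r_def by simp
  qed
  have inj: "inj_on r I"
  proof (rule inj_onI)
    fix i j assume ij: "i \<in> I" "j \<in> I" "r i = r j"
    show "i = j"
    proof (rule ccontr)
      assume "i \<noteq> j"
      then have "R j i \<or> R i j" using tot[OF ij(1,2)] by blast
      then show False using lt[OF ij(1,2)] lt[OF ij(2,1)] ij(3) by auto
    qed
  qed
  have img: "r ` I = I"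
    using card_image[OF inj] sub fin by (intro card_subset_eq) auto
  have perm: "r permutes I"
  proof (rule bij_imp_permutes)
    show "bij_betw r I I" unfolding bij_betw_def using inj img by blast
    show "r x = x" if "x \<notin> I" for x using that unfolding r_def by simp
  qed
  have "(\<Sum>i\<in>I. q i * real (r i)) = (\<Sum>i\<in>I. q i) + (\<Sum>i\<in>I. \<Sum>j\<in>I. if R j i then q i else 0)"
    by (rule sum_rank[OF fin]) (simp add: r_def)
  also have "(\<Sum>i\<in>I. \<Sum>j\<in>I. if R j i then q i else 0)
      = (\<Sum>i\<in>I. \<Sum>j\<in>I. if j < i then (if R j i then q i else q j) else 0)"
    by (rule pair_orient[OF fin irr tot])
  also have "\<dots> = PSo I q" unfolding PSo_def
    by (intro sum.cong refl) (auto simp: R_def)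
  finally show ?thesis using perm unfolding I_def by blast
qed



lemma UP_set: "{(\<Sum>i=1..N. a i (\<pi> i)) | \<pi>. \<pi> permutes {1..N}} = (\<lambda>\<pi>. \<Sum>i=1..N. a i (\<pi> i)) ` {\<pi>. \<pi> permutes {1..N}}"
  by auto

lemma UP_ge: "\<pi> permutes {1..N} \<Longrightarrow> (\<Sum>i=1..N. a i (\<pi> i)) \<le> UP N a"
  unfolding UP_def UP_set by (rule Max_ge) (auto simp: finite_permutations)

lemma UP_ex: "\<exists>\<pi>. \<pi> permutes {1..N} \<and> UP N a = (\<Sum>i=1..N. a i (\<pi> i))"
proof -
  have ne: "{\<pi>. \<pi> permutes {1..N}} \<noteq> {}" using permutes_id by blast
  have "UP N a \<in> (\<lambda>\<pi>. \<Sum>i=1..N. a i (\<pi> i)) ` {\<pi>. \<pi> permutes {1..N}}"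
    unfolding UP_def UP_set by (rule Max_in) (use ne in \<open>auto simp: finite_permutations\<close>)
  then show ?thesis by auto
qed

locale kp = abc +
  fixes N :: nat and p c c' :: "nat \<Rightarrow> real" and s :: int
begin

definition Eb :: "int \<Rightarrow> int \<Rightarrow> int \<Rightarrow> bool \<Rightarrow> nat \<Rightarrow> real" where
  "Eb l m n b i = (if b then eta a1 a2 a3 (p i) (c i) l m n (s - 1) else eta' a1 a2 a3 (p i) (c' i) l m n (s - 1))"
definition qb :: "bool \<Rightarrow> nat \<Rightarrow> real" where "qb b i = (if b then p i else - p i)"
definition CV :: "int \<Rightarrow> int \<Rightarrow> int \<Rightarrow> (nat \<Rightarrow> bool) \<Rightarrow> real" where
  "CV l m n \<epsilon> = (\<Sum>i\<in>{1..N}. Eb l m n (\<epsilon> i) i + qb (\<epsilon> i) i) + PSo {1..N} (\<lambda>i. qb (\<epsilon> i) i)"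

lemma phi_branch:
  "phi a1 a2 a3 (p i) (c i) (c' i) l m n (s + int j - 1)
     = max (Eb l m n True i + qb True i * real j) (Eb l m n False i + qb False i * real j)"
  unfolding phi_def eta_def eta'_def Eb_def qb_def by (simp add: algebra_simps)

lemma branch_le: "Eb l m n b i + qb b i * x \<le> max (Eb l m n True i + qb True i * x) (Eb l m n False i + qb False i * x)"
  by (cases b) auto

lemma tau_char:
  "(\<forall>\<epsilon>. CV l m n \<epsilon> \<le> tau N a1 a2 a3 p c c' s l m n) \<and> (\<exists>\<epsilon>. tau N a1 a2 a3 p c c' s l m n = CV l m n \<epsilon>)"
proof -
  let ?a = "\<lambda>i j. phi a1 a2 a3 (p i) (c i) (c' i) l m n (s + int j - 1)"
  have tdef: "tau N a1 a2 a3 p c c' s l m n = UP N ?a" unfolding tau_def by simp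
  have ge: "CV l m n \<epsilon> \<le> tau N a1 a2 a3 p c c' s l m n" for \<epsilon>
  proof -
    let ?q = "\<lambda>i. qb (\<epsilon> i) i"
    obtain r where r: "r permutes {1..N}" and rs: "(\<Sum>i\<in>{1..N}. ?q i * real (r i)) = (\<Sum>i\<in>{1..N}. ?q i) + PSo {1..N} ?q"
      using R2_exists[where q = ?q and N = N] by blast
    have "CV l m n \<epsilon> = (\<Sum>i\<in>{1..N}. Eb l m n (\<epsilon> i) i + ?q i * real (r i))"
      unfolding CV_def using rs by (simp add: sum.distrib)
    also have "\<dots> \<le> (\<Sum>i=1..N. ?a i (r i))"
      unfolding phi_branch by (intro sum_mono branch_le)
    also have "\<dots> \<le> UP N ?a" by (rule UP_ge[OF r])
    finally show ?thesis using tdef by simp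
  qed
  obtain \<pi> where pi: "\<pi> permutes {1..N}" and up: "UP N ?a = (\<Sum>i=1..N. ?a i (\<pi> i))" using UP_ex by blast
  define \<epsilon> where "\<epsilon> i = (Eb l m n False i + qb False i * real (\<pi> i) \<le> Eb l m n True i + qb True i * real (\<pi> i))" for i
  have br: "?a i (\<pi> i) = Eb l m n (\<epsilon> i) i + qb (\<epsilon> i) i * real (\<pi> i)" for i
    unfolding phi_branch \<epsilon>_def by (cases "Eb l m n False i + qb False i * real (\<pi> i) \<le> Eb l m n True i + qb True i * real (\<pi> i)") (simp_all add: max_def)
  have "(\<Sum>i=1..N. ?a i (\<pi> i)) = (\<Sum>i\<in>{1..N}. Eb l m n (\<epsilon> i) i) + (\<Sum>i\<in>{1..N}. qb (\<epsilon> i) i * real (\<pi> i))"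
    unfolding br by (simp add: sum.distrib)
  also have "\<dots> \<le> (\<Sum>i\<in>{1..N}. Eb l m n (\<epsilon> i) i) + ((\<Sum>i\<in>{1..N}. qb (\<epsilon> i) i) + PSo {1..N} (\<lambda>i. qb (\<epsilon> i) i))"
    using R1_ineq[OF pi] by simp
  also have "\<dots> = CV l m n \<epsilon>" unfolding CV_def by (simp add: sum.distrib)
  finally have "tau N a1 a2 a3 p c c' s l m n \<le> CV l m n \<epsilon>" using tdef up by simp
  then show ?thesis using ge by (meson antisym)
qed

lemma Eb_shift: "Eb (l + e1) (m + e2) (n + e3) b i = Eb l m n b i + of_int e1 * max 0 (qb b i - a1)
   + of_int e2 * max 0 (qb b i - a2) + of_int e3 * max 0 (qb b i - a3)"
  unfolding Eb_def qb_def eta_def eta'_def by (simp add: algebra_simps)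

definition ABC :: "int \<Rightarrow> int \<Rightarrow> int \<Rightarrow> real \<Rightarrow> real" where
  "ABC e1 e2 e3 q = of_int e1 * max 0 (q - a1) + of_int e2 * max 0 (q - a2) + of_int e3 * max 0 (q - a3)"
definition lamg :: "int \<Rightarrow> int \<Rightarrow> int \<Rightarrow> real \<Rightarrow> real" where
  "lamg e1 e2 e3 q = ABC e1 e2 e3 q + ABC (1 - e1) (1 - e2) (1 - e3) (-q)"
definition PVg :: "int \<Rightarrow> int \<Rightarrow> int \<Rightarrow> int \<Rightarrow> int \<Rightarrow> int \<Rightarrow> (nat \<Rightarrow> bool) \<Rightarrow> (nat \<Rightarrow> bool) \<Rightarrow> real" where
  "PVg l m n e1 e2 e3 \<delta> \<delta>' = CV (l + e1) (m + e2) (n + e3) \<delta> + CV (l + (1 - e1)) (m + (1 - e2)) (n + (1 - e3)) \<delta>'"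
definition Dset :: "(nat \<Rightarrow> bool) \<Rightarrow> (nat \<Rightarrow> bool) \<Rightarrow> nat set" where
  "Dset \<delta> \<delta>' = {i\<in>{1..N}. \<delta> i \<noteq> \<delta>' i}"
definition Pm :: "nat \<Rightarrow> real" where "Pm i = \<bar>p i\<bar>"
definition sg :: "(nat \<Rightarrow> bool) \<Rightarrow> nat \<Rightarrow> int" where "sg \<delta> i = (if 0 \<le> qb (\<delta> i) i then 1 else -1)"
definition ZP :: "nat set \<Rightarrow> (nat \<Rightarrow> bool) \<Rightarrow> nat \<Rightarrow> nat \<Rightarrow> real" where
  "ZP D \<delta> i j = (if i \<in> D then (if j \<in> D then 0 else max (Pm i) (qb (\<delta> j) j) + max (- Pm i) (qb (\<delta> j) j))
     else (if j \<in> D then max (qb (\<delta> i) i) (Pm j) + max (qb (\<delta> i) i) (- Pm j) else 2 * max (qb (\<delta> i) i) (qb (\<delta> j) j)))"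
definition Zf :: "int \<Rightarrow> int \<Rightarrow> int \<Rightarrow> nat set \<Rightarrow> (nat \<Rightarrow> bool) \<Rightarrow> real" where
  "Zf l m n D \<delta> = (\<Sum>i\<in>{1..N}. if i \<in> D then Eb l m n True i + Eb l m n False i
       else 2 * Eb l m n (\<delta> i) i + 2 * qb (\<delta> i) i + ABC 1 1 1 (qb (\<delta> i) i))
     + (\<Sum>i\<in>{1..N}. \<Sum>j\<in>{1..N}. if j < i then ZP D \<delta> i j else 0)"

lemma sgP: "of_int (sg \<delta> i) * Pm i = qb (\<delta> i) i"
  unfolding sg_def Pm_def qb_def by auto

lemma CV_shift: "CV (l + e1) (m + e2) (n + e3) \<delta> = (\<Sum>i\<in>{1..N}. Eb l m n (\<delta> i) i + qb (\<delta> i) i + ABC e1 e2 e3 (qb (\<delta> i) i))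
   + PSo {1..N} (\<lambda>i. qb (\<delta> i) i)"
  unfolding CV_def Eb_shift ABC_def by (simp add: algebra_simps)

lemma max_pair1: "max x y + max (-x) (-y) = \<bar>x - y\<bar>" for x y :: real by auto
lemma max_pair2: "max x t + max (-x) t = max \<bar>x\<bar> t + max (- \<bar>x\<bar>) t" for x t :: real by auto
lemma max_pair3: "max t x + max t (-x) = max t \<bar>x\<bar> + max t (- \<bar>x\<bar>)" for x t :: real by auto

lemma sum_restrict: assumes "D \<subseteq> I" "finite I"
  shows "(\<Sum>i\<in>I. if i \<in> D then f i else 0) = sum f D"
proof -
  have "{i\<in>I. i \<in> D} = D" using assms by auto
  then show ?thesis using sum.inter_filter[OF assms(2), of f "\<lambda>i. i \<in> D"] by simp
qed

lemma half_sum: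
  fixes x :: "nat \<Rightarrow> real"
  assumes D: "D \<subseteq> I" and fin: "finite I"
  shows "(\<Sum>i\<in>I. \<Sum>j\<in>I. if j < i then (if i \<in> D \<and> j \<in> D then \<bar>x i - x j\<bar> else 0) else 0) = PSd D x"
proof -
  have finD: "finite D" using D fin finite_subset by blast
  have "(\<Sum>i\<in>I. \<Sum>j\<in>I. if j < i then (if i \<in> D \<and> j \<in> D then \<bar>x i - x j\<bar> else 0) else 0)
      = (\<Sum>i\<in>I. if i \<in> D then (\<Sum>j\<in>I. if j \<in> D then (if j < i then \<bar>x i - x j\<bar> else 0) else 0) else 0)"
    by (intro sum.cong refl) (auto intro!: sum.neutral sum.cong)
  also have "\<dots> = (\<Sum>i\<in>D. \<Sum>j\<in>D. if j < i then \<bar>x i - x j\<bar> else 0)"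
  proof -
    have inner: "(\<Sum>j\<in>I. if j \<in> D then (if j < i then \<bar>x i - x j\<bar> else 0) else 0)
       = (\<Sum>j\<in>D. if j < i then \<bar>x i - x j\<bar> else 0)" for i
      by (rule sum_restrict[OF D fin])
    show ?thesis unfolding inner by (rule sum_restrict[OF D fin])
  qed
  finally have 1: "(\<Sum>i\<in>I. \<Sum>j\<in>I. if j < i then (if i \<in> D \<and> j \<in> D then \<bar>x i - x j\<bar> else 0) else 0)
      = (\<Sum>i\<in>D. \<Sum>j\<in>D. if j < i then \<bar>x i - x j\<bar> else 0)" .
  have "(\<Sum>i\<in>D. \<Sum>j\<in>D. \<bar>x i - x j\<bar>) = (\<Sum>i\<in>D. \<Sum>j\<in>D. (if j < i then \<bar>x i - x j\<bar> else 0) + (if i < j then \<bar>x i - x j\<bar> else 0))"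
  proof (intro sum.cong refl)
    fix i j show "\<bar>x i - x j\<bar> = (if j < i then \<bar>x i - x j\<bar> else 0) + (if i < j then \<bar>x i - x j\<bar> else 0)"
      by (cases i j rule: linorder_cases) auto
  qed
  also have "\<dots> = (\<Sum>i\<in>D. \<Sum>j\<in>D. if j < i then \<bar>x i - x j\<bar> else 0) + (\<Sum>i\<in>D. \<Sum>j\<in>D. if i < j then \<bar>x i - x j\<bar> else 0)"
    by (simp add: sum.distrib)
  also have "(\<Sum>i\<in>D. \<Sum>j\<in>D. if i < j then \<bar>x i - x j\<bar> else 0) = (\<Sum>j\<in>D. \<Sum>i\<in>D. if i < j then \<bar>x i - x j\<bar> else 0)"
    by (rule sum.swap)
  also have "\<dots> = (\<Sum>i\<in>D. \<Sum>j\<in>D. if j < i then \<bar>x i - x j\<bar> else 0)"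
    by (intro sum.cong refl) (simp add: abs_minus_commute)
  finally show ?thesis unfolding PSd_def using 1 by simp
qed

lemma ABC_add: "ABC e1 e2 e3 q + ABC (1 - e1) (1 - e2) (1 - e3) q = ABC 1 1 1 q"
  unfolding ABC_def by (simp add: algebra_simps)

lemma PV_decomp:
  "PVg l m n e1 e2 e3 \<delta> \<delta>' = Zf l m n (Dset \<delta> \<delta>') \<delta> + PSd (Dset \<delta> \<delta>') (\<lambda>i. qb (\<delta> i) i)
     + (\<Sum>i\<in>Dset \<delta> \<delta>'. lamg e1 e2 e3 (qb (\<delta> i) i))"
proof -
  define D where "D = Dset \<delta> \<delta>'"
  define I where "I = {1..N}"
  define q where "q i = qb (\<delta> i) i" for i
  define q' where "q' i = qb (\<delta>' i) i" for i
  have DI: "D \<subseteq> I" unfolding D_def Dset_def I_def by auto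
  have fin: "finite I" unfolding I_def by simp
  have qD: "q' i = - q i" if "i \<in> D" for i using that unfolding D_def Dset_def q_def q'_def qb_def by auto
  have qN: "q' i = q i" if "i \<in> I" "i \<notin> D" for i using that unfolding D_def Dset_def I_def q_def q'_def by auto
  have Pq: "Pm i = \<bar>q i\<bar>" for i unfolding Pm_def q_def qb_def by auto
  have elem: "(Eb l m n (\<delta> i) i + q i + ABC e1 e2 e3 (q i)) + (Eb l m n (\<delta>' i) i + q' i + ABC (1 - e1) (1 - e2) (1 - e3) (q' i))
      = (if i \<in> D then Eb l m n True i + Eb l m n False i
       else 2 * Eb l m n (\<delta> i) i + 2 * q i + ABC 1 1 1 (q i)) + (if i \<in> D then lamg e1 e2 e3 (q i) else 0)"
    if i: "i \<in> I" for i
  proof (cases "i \<in> D")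
    case True
    then have "\<delta>' i = (\<not> \<delta> i)" unfolding D_def Dset_def by auto
    then show ?thesis using True qD[OF True] unfolding lamg_def by (cases "\<delta> i") auto
  next
    case False
    then have "\<delta>' i = \<delta> i" using i unfolding D_def Dset_def I_def by auto
    then show ?thesis using False ABC_add[of e1 e2 e3 "q i"] unfolding q_def q'_def by simp
  qed
  have pair: "max (q i) (q j) + max (q' i) (q' j) = ZP D \<delta> i j + (if i \<in> D \<and> j \<in> D then \<bar>q i - q j\<bar> else 0)"
    if ij: "i \<in> I" "j \<in> I" for i j
  proof (cases "i \<in> D"; cases "j \<in> D")
    assume "i \<in> D" "j \<in> D" then show ?thesis using qD max_pair1 unfolding ZP_def by simp
  next
    assume a: "i \<in> D" "j \<notin> D" then show ?thesis using qD[OF a(1)] qN[OF ij(2) a(2)] max_pair2 Pq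
      unfolding ZP_def q_def by simp
  next
    assume a: "i \<notin> D" "j \<in> D" then show ?thesis using qD[OF a(2)] qN[OF ij(1) a(1)] max_pair3 Pq
      unfolding ZP_def q_def by simp
  next
    assume a: "i \<notin> D" "j \<notin> D" then show ?thesis using qN[OF ij(1) a(1)] qN[OF ij(2) a(2)]
      unfolding ZP_def q_def by simp
  qed
  have "PVg l m n e1 e2 e3 \<delta> \<delta>' = (\<Sum>i\<in>I. (Eb l m n (\<delta> i) i + q i + ABC e1 e2 e3 (q i)) + (Eb l m n (\<delta>' i) i + q' i + ABC (1 - e1) (1 - e2) (1 - e3) (q' i)))
     + (PSo I q + PSo I q')"
    unfolding PVg_def CV_shift I_def q_def q'_def by (simp add: sum.distrib)
  also have "(\<Sum>i\<in>I. (Eb l m n (\<delta> i) i + q i + ABC e1 e2 e3 (q i)) + (Eb l m n (\<delta>' i) i + q' i + ABC (1 - e1) (1 - e2) (1 - e3) (q' i)))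
     = (\<Sum>i\<in>I. if i \<in> D then Eb l m n True i + Eb l m n False i
       else 2 * Eb l m n (\<delta> i) i + 2 * q i + ABC 1 1 1 (q i)) + (\<Sum>i\<in>D. lamg e1 e2 e3 (q i))"
    using elem sum_restrict[OF DI fin, of "\<lambda>i. lamg e1 e2 e3 (q i)"] by (simp add: sum.distrib)
  also have "PSo I q + PSo I q' = (\<Sum>i\<in>I. \<Sum>j\<in>I. if j < i then ZP D \<delta> i j else 0)
      + (\<Sum>i\<in>I. \<Sum>j\<in>I. if j < i then (if i \<in> D \<and> j \<in> D then \<bar>q i - q j\<bar> else 0) else 0)"
  proof -
    have "PSo I q + PSo I q' = (\<Sum>i\<in>I. \<Sum>j\<in>I. (if j < i then ZP D \<delta> i j else 0)
      + (if j < i then (if i \<in> D \<and> j \<in> D then \<bar>q i - q j\<bar> else 0) else 0))"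
      unfolding PSo_def sum.distrib[symmetric] using pair by (intro sum.cong refl) auto
    then show ?thesis by (simp add: sum.distrib)
  qed
  also have "(\<Sum>i\<in>I. \<Sum>j\<in>I. if j < i then (if i \<in> D \<and> j \<in> D then \<bar>q i - q j\<bar> else 0) else 0) = PSd D q"
    by (rule half_sum[OF DI fin])
  finally show ?thesis unfolding Zf_def D_def[symmetric] I_def[symmetric] q_def[symmetric] by simp
qed

lemma lamg_lam: "lamg 0 1 0 = lam 0" "lamg 1 0 0 = lam 1" "lamg 0 0 1 = lam 2"
  unfolding lamg_def ABC_def lam_def by (auto simp: fun_eq_iff)

lemma V_sg: "V k (Dset \<delta> \<delta>') Pm (sg \<delta>) = PSd (Dset \<delta> \<delta>') (\<lambda>i. qb (\<delta> i) i)
     + (\<Sum>i\<in>Dset \<delta> \<delta>'. lam k (qb (\<delta> i) i)) - cst k"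
  unfolding V_def sgP by simp

lemma PV_V:
  "PVg l m n 0 1 0 \<delta> \<delta>' - a2 = Zf l m n (Dset \<delta> \<delta>') \<delta> + V 0 (Dset \<delta> \<delta>') Pm (sg \<delta>)"
  "PVg l m n 1 0 0 \<delta> \<delta>' - a1 = Zf l m n (Dset \<delta> \<delta>') \<delta> + V 1 (Dset \<delta> \<delta>') Pm (sg \<delta>)"
  "PVg l m n 0 0 1 \<delta> \<delta>' - a2 = Zf l m n (Dset \<delta> \<delta>') \<delta> + V 2 (Dset \<delta> \<delta>') Pm (sg \<delta>)"
  unfolding PV_decomp V_sg lamg_lam cst_def by simp_all

lemma V_cong2: assumes "\<forall>i\<in>D. of_int (u i) * P i = of_int (w i) * P i" shows "V k D P u = V k D P w"
proof -
  have h: "\<And>i. i \<in> D \<Longrightarrow> of_int (u i) * P i = of_int (w i) * P i" using assms by blast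
  show ?thesis unfolding V_def PSd_def
    by (intro arg_cong2[where f="(-)"] arg_cong2[where f="(+)"] arg_cong2[where f="(/)"] sum.cong refl)
       (simp_all add: h)
qed

lemma reach:
  assumes s': "s' \<in> SG (Dset \<epsilon> \<epsilon>')"
  shows "\<exists>\<delta> \<delta>'. Dset \<delta> \<delta>' = Dset \<epsilon> \<epsilon>' \<and> Zf l m n (Dset \<delta> \<delta>') \<delta> = Zf l m n (Dset \<epsilon> \<epsilon>') \<epsilon>
     \<and> (\<forall>k. V k (Dset \<delta> \<delta>') Pm (sg \<delta>) = V k (Dset \<epsilon> \<epsilon>') Pm s')"
proof -
  define D where "D = Dset \<epsilon> \<epsilon>'"
  define \<delta> where "\<delta> i = (if i \<in> D then (if s' i = sg \<epsilon> i then \<epsilon> i else \<not> \<epsilon> i) else \<epsilon> i)" for i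
  define \<delta>' where "\<delta>' i = (if i \<in> D then \<not> \<delta> i else \<epsilon>' i)" for i
  have DI: "D \<subseteq> {1..N}" unfolding D_def Dset_def by auto
  have Dd: "Dset \<delta> \<delta>' = D"
    unfolding Dset_def \<delta>'_def \<delta>_def using DI by (auto simp: D_def Dset_def)
  have out: "\<delta> i = \<epsilon> i" if "i \<notin> D" for i using that unfolding \<delta>_def by simp
  have inD: "of_int (sg \<delta> i) * Pm i = of_int (s' i) * Pm i" if i: "i \<in> D" for i
  proof -
    have s'i: "s' i = 1 \<or> s' i = -1" using s' i unfolding SG_def D_def by auto
    have sgi: "sg \<epsilon> i = 1 \<or> sg \<epsilon> i = -1" unfolding sg_def by auto
    have e1: "of_int (sg \<epsilon> i) * Pm i = qb (\<epsilon> i) i" by (rule sgP)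
    have e2: "of_int (sg \<delta> i) * Pm i = qb (\<delta> i) i" by (rule sgP)
    show ?thesis
    proof (cases "s' i = sg \<epsilon> i")
      case True then show ?thesis using e1 e2 i unfolding \<delta>_def by simp
    next
      case False
      then have "s' i = - sg \<epsilon> i" using s'i sgi by auto
      moreover have "qb (\<delta> i) i = - qb (\<epsilon> i) i" using False i unfolding \<delta>_def qb_def by auto
      ultimately show ?thesis using e1 e2 by simp
    qed
  qed
  have Z: "Zf l m n D \<delta> = Zf l m n D \<epsilon>"
    unfolding Zf_def ZP_def using out by (intro arg_cong2[where f="(+)"] sum.cong refl) auto
  show ?thesis
    apply (rule exI[of _ \<delta>], rule exI[of _ \<delta>'])
    using Dd Z inD V_cong2[of D "sg \<delta>" Pm s'] unfolding D_def by auto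
qed

lemma Dset_fin: "finite (Dset \<delta> \<delta>')" unfolding Dset_def by simp
lemma Pm_nn: "\<forall>i\<in>D. 0 \<le> Pm i" unfolding Pm_def by simp

abbreviation T :: "int \<Rightarrow> int \<Rightarrow> int \<Rightarrow> real" where "T l m n \<equiv> tau N a1 a2 a3 p c c' s l m n"

lemma PV_le:
  "PVg l m n 0 1 0 \<delta> \<delta>' \<le> T l (m+1) n + T (l+1) m (n+1)"
  "PVg l m n 1 0 0 \<delta> \<delta>' \<le> T (l+1) m n + T l (m+1) (n+1)"
  "PVg l m n 0 0 1 \<delta> \<delta>' \<le> T l m (n+1) + T (l+1) (m+1) n"
  unfolding PVg_def using tau_char by (simp_all add: add_mono)

lemma PV_ex:
  "\<exists>\<delta> \<delta>'. PVg l m n 0 1 0 \<delta> \<delta>' = T l (m+1) n + T (l+1) m (n+1)"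
  "\<exists>\<delta> \<delta>'. PVg l m n 1 0 0 \<delta> \<delta>' = T (l+1) m n + T l (m+1) (n+1)"
  "\<exists>\<delta> \<delta>'. PVg l m n 0 0 1 \<delta> \<delta>' = T l m (n+1) + T (l+1) (m+1) n"
  unfolding PVg_def using tau_char by (simp_all, metis)+

lemma kp_eq:
  "T l (m+1) n + T (l+1) m (n+1) - a2 = max (T (l+1) m n + T l (m+1) (n+1) - a1) (T l m (n+1) + T (l+1) (m+1) n - a2)"
proof -
  obtain \<epsilon>1 \<epsilon>2 where e12: "PVg l m n 0 1 0 \<epsilon>1 \<epsilon>2 = T l (m+1) n + T (l+1) m (n+1)" using PV_ex(1) by blast
  obtain s0 where s0: "s0 \<in> SG (Dset \<epsilon>1 \<epsilon>2)"
    and le0: "\<forall>u\<in>SG (Dset \<epsilon>1 \<epsilon>2). \<forall>k\<le>2. V k (Dset \<epsilon>1 \<epsilon>2) Pm u \<le> V 0 (Dset \<epsilon>1 \<epsilon>2) Pm s0"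
    and ex0: "\<exists>u\<in>SG (Dset \<epsilon>1 \<epsilon>2). V 1 (Dset \<epsilon>1 \<epsilon>2) Pm u = V 0 (Dset \<epsilon>1 \<epsilon>2) Pm s0 \<or> V 2 (Dset \<epsilon>1 \<epsilon>2) Pm u = V 0 (Dset \<epsilon>1 \<epsilon>2) Pm s0"
    using Dlemma[OF Dset_fin Pm_nn] by blast
  have sgs: "sg \<epsilon>1 \<in> SG (Dset \<epsilon>1 \<epsilon>2)" unfolding SG_def sg_def by auto
  have L1: "T l (m+1) n + T (l+1) m (n+1) - a2 \<le> Zf l m n (Dset \<epsilon>1 \<epsilon>2) \<epsilon>1 + V 0 (Dset \<epsilon>1 \<epsilon>2) Pm s0"
    using PV_V(1)[of l m n \<epsilon>1 \<epsilon>2] e12 le0 sgs by force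
  have LR: "T l (m+1) n + T (l+1) m (n+1) - a2 \<le> max (T (l+1) m n + T l (m+1) (n+1) - a1) (T l m (n+1) + T (l+1) (m+1) n - a2)"
  proof -
    obtain u where u: "u \<in> SG (Dset \<epsilon>1 \<epsilon>2)" and uu: "V 1 (Dset \<epsilon>1 \<epsilon>2) Pm u = V 0 (Dset \<epsilon>1 \<epsilon>2) Pm s0 \<or> V 2 (Dset \<epsilon>1 \<epsilon>2) Pm u = V 0 (Dset \<epsilon>1 \<epsilon>2) Pm s0"
      using ex0 by blast
    obtain \<delta> \<delta>' where d: "Dset \<delta> \<delta>' = Dset \<epsilon>1 \<epsilon>2" "Zf l m n (Dset \<delta> \<delta>') \<delta> = Zf l m n (Dset \<epsilon>1 \<epsilon>2) \<epsilon>1"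
        "\<forall>k. V k (Dset \<delta> \<delta>') Pm (sg \<delta>) = V k (Dset \<epsilon>1 \<epsilon>2) Pm u"
      using reach[OF u] by blast
    from uu show ?thesis
    proof
      assume "V 1 (Dset \<epsilon>1 \<epsilon>2) Pm u = V 0 (Dset \<epsilon>1 \<epsilon>2) Pm s0"
      then have "PVg l m n 1 0 0 \<delta> \<delta>' - a1 = Zf l m n (Dset \<epsilon>1 \<epsilon>2) \<epsilon>1 + V 0 (Dset \<epsilon>1 \<epsilon>2) Pm s0"
        using PV_V(2)[of l m n \<delta> \<delta>'] d by simp
      then show ?thesis using L1 PV_le(2)[of l m n \<delta> \<delta>'] by linarith
    next
      assume "V 2 (Dset \<epsilon>1 \<epsilon>2) Pm u = V 0 (Dset \<epsilon>1 \<epsilon>2) Pm s0"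
      then have "PVg l m n 0 0 1 \<delta> \<delta>' - a2 = Zf l m n (Dset \<epsilon>1 \<epsilon>2) \<epsilon>1 + V 0 (Dset \<epsilon>1 \<epsilon>2) Pm s0"
        using PV_V(3)[of l m n \<delta> \<delta>'] d by simp
      then show ?thesis using L1 PV_le(3)[of l m n \<delta> \<delta>'] by linarith
    qed
  qed
  have bk: "Zf l m n (Dset \<epsilon> \<epsilon>') \<epsilon> + V k (Dset \<epsilon> \<epsilon>') Pm (sg \<epsilon>) \<le> T l (m+1) n + T (l+1) m (n+1) - a2"
    if k: "k \<le> 2" for \<epsilon> \<epsilon>' k
  proof -
    obtain s0 where s0: "s0 \<in> SG (Dset \<epsilon> \<epsilon>')"
      and le0: "\<forall>u\<in>SG (Dset \<epsilon> \<epsilon>'). \<forall>k\<le>2. V k (Dset \<epsilon> \<epsilon>') Pm u \<le> V 0 (Dset \<epsilon> \<epsilon>') Pm s0"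
      using Dlemma[OF Dset_fin Pm_nn] by blast
    have sgs: "sg \<epsilon> \<in> SG (Dset \<epsilon> \<epsilon>')" unfolding SG_def sg_def by auto
    obtain \<delta> \<delta>' where d: "Dset \<delta> \<delta>' = Dset \<epsilon> \<epsilon>'" "Zf l m n (Dset \<delta> \<delta>') \<delta> = Zf l m n (Dset \<epsilon> \<epsilon>') \<epsilon>"
        "\<forall>k. V k (Dset \<delta> \<delta>') Pm (sg \<delta>) = V k (Dset \<epsilon> \<epsilon>') Pm s0"
      using reach[OF s0] by blast
    have "PVg l m n 0 1 0 \<delta> \<delta>' - a2 = Zf l m n (Dset \<epsilon> \<epsilon>') \<epsilon> + V 0 (Dset \<epsilon> \<epsilon>') Pm s0"
      using PV_V(1)[of l m n \<delta> \<delta>'] d by simp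
    moreover have "V k (Dset \<epsilon> \<epsilon>') Pm (sg \<epsilon>) \<le> V 0 (Dset \<epsilon> \<epsilon>') Pm s0" using le0 sgs k by blast
    ultimately show ?thesis using PV_le(1)[of l m n \<delta> \<delta>'] by linarith
  qed
  have R1: "T (l+1) m n + T l (m+1) (n+1) - a1 \<le> T l (m+1) n + T (l+1) m (n+1) - a2"
  proof -
    obtain \<epsilon> \<epsilon>' where "PVg l m n 1 0 0 \<epsilon> \<epsilon>' = T (l+1) m n + T l (m+1) (n+1)" using PV_ex(2) by blast
    then show ?thesis using PV_V(2)[of l m n \<epsilon> \<epsilon>'] bk[of 1 \<epsilon> \<epsilon>'] by simp
  qed
  have R2: "T l m (n+1) + T (l+1) (m+1) n - a2 \<le> T l (m+1) n + T (l+1) m (n+1) - a2"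
  proof -
    obtain \<epsilon> \<epsilon>' where "PVg l m n 0 0 1 \<epsilon> \<epsilon>' = T l m (n+1) + T (l+1) (m+1) n" using PV_ex(3) by blast
    then show ?thesis using PV_V(3)[of l m n \<epsilon> \<epsilon>'] bk[of 2 \<epsilon> \<epsilon>'] by simp
  qed
  show ?thesis using LR R1 R2 by linarith
qed

end

theorem theorem2:
  fixes N :: nat and a1 a2 a3 :: real and p c c' :: "nat \<Rightarrow> real" and s l m n :: int
  assumes "N \<ge> 1" and "a1 > a2" and "a2 > a3"
  shows "tau N a1 a2 a3 p c c' s l (m + 1) n + tau N a1 a2 a3 p c c' s (l + 1) m (n + 1) - a2
       = max (tau N a1 a2 a3 p c c' s (l + 1) m n + tau N a1 a2 a3 p c c' s l (m + 1) (n + 1) - a1)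
             (tau N a1 a2 a3 p c c' s l m (n + 1) + tau N a1 a2 a3 p c c' s (l + 1) (m + 1) n - a2)"
proof -
  interpret kp a1 a2 a3 N p c c' s
    by unfold_locales (use assms in auto)
  show ?thesis using kp_eq[of l m n] by simp
qed

end
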